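(* There is a family of $1$-dimensional Hegselmann–Krause systems with $n$ agents (for infinitely many $n$) and a fixed confidence bound $\varepsilon>0$, whose social networks have $|E|=\Theta(n^2)$ edges and whose initial states $S_0$ satisfy $\Phi(S_0)=\Theta(n^2\varepsilon^2)$, such that the expected potential drop in the first step under uniform random asynchronous updates is $\mathbb{E}[\Phi(S_0)-\Phi(S_1)]=\Theta(\varepsilon^2/n^3)$.
   Context: A $1$-dimensional Hegselmann–Krause system has a finite undirected graph $G=(V,E)$ (social network) with $n=|V|$ agents, a confidence bound $\varepsilon>0$, and positions $x_v(t)\in\mathbb{R}$. The influencing neighborhood is $N_v(t)=\{u:\{u,v\}\in E,\ |x_u(t)-x_v(t)|\le\varepsilon\}\cup\{v\}$. Uniform random asynchronous updates: at each step $t$ one agent $v$ is chosen uniformly at random and set to $x_v(t+1)=\frac{1}{|N_v(t)|}\sum_{u\in N_v(t)}x_u(t)$, others unchanged; $S_t$ denotes the state at time $t$. The potential of a state is $\Phi(S)=\sum_{\{u,v\}\in E}\min\{|x_u-x_v|^2,\varepsilon^2\}$. *)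

theory Defs
  imports Complex_Main
begin

text \<open>Each undirected edge {u,v} appears as both (u,v) and (v,u).\<close>
definition hk_graph :: "nat \<Rightarrow> (nat \<times> nat) set \<Rightarrow> bool" where
  "hk_graph n E \<longleftrightarrow> E \<subseteq> {..<n} \<times> {..<n} \<and> sym E \<and> (\<forall>v. (v, v) \<notin> E)"

definition und_edges :: "(nat \<times> nat) set \<Rightarrow> (nat \<times> nat) set" where
  "und_edges E = {(u, v). (u, v) \<in> E \<and> u < v}"

definition num_edges :: "(nat \<times> nat) set \<Rightarrow> nat" where
  "num_edges E = card (und_edges E)"

definition hk_nbhd :: "(nat \<times> nat) set \<Rightarrow> real \<Rightarrow> (nat \<Rightarrow> real) \<Rightarrow> nat \<Rightarrow> nat set" where
  "hk_nbhd E eps x v = {u. (u, v) \<in> E \<and> \<bar>x u - x v\<bar> \<le> eps} \<union> {v}"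

definition hk_update :: "(nat \<times> nat) set \<Rightarrow> real \<Rightarrow> (nat \<Rightarrow> real) \<Rightarrow> nat \<Rightarrow> (nat \<Rightarrow> real)" where
  "hk_update E eps x v =
     x(v := (\<Sum>u\<in>hk_nbhd E eps x v. x u) / real (card (hk_nbhd E eps x v)))"

definition hk_potential :: "(nat \<times> nat) set \<Rightarrow> real \<Rightarrow> (nat \<Rightarrow> real) \<Rightarrow> real" where
  "hk_potential E eps x = (\<Sum>(u, v)\<in>und_edges E. min ((x u - x v)^2) (eps^2))"

definition hk_expected_drop :: "nat \<Rightarrow> (nat \<times> nat) set \<Rightarrow> real \<Rightarrow> (nat \<Rightarrow> real) \<Rightarrow> real" where
  "hk_expected_drop n E eps x =
     (\<Sum>v<n. hk_potential E eps x - hk_potential E eps (hk_update E eps x v)) / real n"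

end

theory Submission
  imports Defs
begin

definition EE :: "nat \<Rightarrow> (nat \<times> nat) set" where
  "EE n = {(u,v). u<n \<and> v<n \<and> u\<noteq>v}"

definition xs :: "nat \<Rightarrow> nat \<Rightarrow> real" where
  "xs n v = (if v=0 then 0 else if v=1 then 1/real n else 3*real v)"

lemma und: "und_edges (EE n) = {(u,v). u<v \<and> v<n}"
  by (auto simp: und_edges_def EE_def)

lemma graph: "hk_graph n (EE n)"
  by (auto simp: hk_graph_def EE_def sym_def)

lemma edges_lower: "real m ^ 2 \<le> real (num_edges (EE (2*m)))"
proof -
  have "{..<m} \<times> {m..<2*m} \<subseteq> und_edges (EE (2*m))" by (auto simp: und)
  moreover have "finite (und_edges (EE (2*m)))"
    by (rule finite_subset[of _ "{..<2*m} \<times> {..<2*m}"]) (auto simp: und)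
  ultimately have "card ({..<m} \<times> {m..<2*m}) \<le> num_edges (EE (2*m))"
    unfolding num_edges_def by (rule card_mono[rotated])
  then have "m*m \<le> num_edges (EE (2*m))" by (simp add: card_cartesian_product)
  then have "real (m*m) \<le> real (num_edges (EE (2*m)))" by linarith
  then show ?thesis by (simp add: power2_eq_square)
qed

lemma fin: "finite (und_edges (EE n))"
  by (rule finite_subset[of _ "{..<n} \<times> {..<n}"]) (auto simp: und)

lemma edges_upper: "real (num_edges (EE n)) \<le> real n ^ 2"
proof -
  have "und_edges (EE n) \<subseteq> {..<n} \<times> {..<n}" by (auto simp: und)
  then have "num_edges (EE n) \<le> card ({..<n} \<times> {..<n})"
    unfolding num_edges_def by (rule card_mono[rotated]) auto
  then have "num_edges (EE n) \<le> n*n" by (simp add: card_cartesian_product)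
  then have "real (num_edges (EE n)) \<le> real (n*n)" by linarith
  then show ?thesis by (simp add: power2_eq_square)
qed

lemma far: assumes "n \<ge> 4" "u \<noteq> v" "\<not> (u \<le> 1 \<and> v \<le> 1)"
  shows "\<bar>xs n u - xs n v\<bar> > 1"
proof -
  have a: "1 / real n \<le> 1/4" using assms(1) by (simp add: field_simps)
  have b: "0 \<le> 1 / real n" by simp
  consider "u = 0" | "u = 1" | "u \<ge> 2" by linarith
  then show ?thesis
  proof cases
    case 1 then have "v \<ge> 2" using assms by auto
    then show ?thesis using 1 by (simp add: xs_def)
  next
    case 2 then have "v \<ge> 2" using assms by auto
    then show ?thesis using 2 a b by (simp add: xs_def)
  next
    case 3
    then consider "v = 0" | "v = 1" | "v \<ge> 2" by linarith
    then show ?thesis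
    proof cases
      case 1 then show ?thesis using 3 by (simp add: xs_def)
    next
      case 2 then show ?thesis using 3 a b by (simp add: xs_def)
    next
      case 4: 3
      have "u+1 \<le> v \<or> v+1 \<le> u" using assms(2) by arith
      then have "real u + 1 \<le> real v \<or> real v + 1 \<le> real u" by (metis of_nat_1 of_nat_add of_nat_le_iff)
      then have "\<bar>real u - real v\<bar> \<ge> 1" by linarith
      then show ?thesis using 3 4 by (simp add: xs_def)
    qed
  qed
qed

lemma pot2:
  assumes n: "n \<ge> 4" and y2: "\<And>w. w \<ge> 2 \<Longrightarrow> y w = xs n w"
    and y0: "\<bar>y 0\<bar> \<le> 1/4" and y1: "\<bar>y 1\<bar> \<le> 1/4"
  shows "hk_potential (EE n) 1 y = real (num_edges (EE n)) - 1 + (y 0 - y 1)^2"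
proof -
  let ?U = "und_edges (EE n)"
  let ?g = "\<lambda>(u,v). min ((y u - y v)^2) (1::real)"
  have mem: "(0,1) \<in> ?U" using n by (simp add: und)
  have one: "?g e = 1" if e: "e \<in> ?U - {(0,1)}" for e
  proof -
    obtain u v where uv: "e = (u,v)" by fastforce
    have uv2: "u < v" "v < n" "(u,v) \<noteq> (0,1)" using e uv by (auto simp: und)
    have "\<not>(u=0 \<and> v=1)" using uv2(3) by auto
    then have v2: "v \<ge> 2" using uv2 by linarith
    have "\<bar>y u - y v\<bar> > 1"
    proof (cases "u \<ge> 2")
      case True
      then show ?thesis using far[OF n, of u v] uv2 y2 v2 by simp
    next
      case False
      then have "\<bar>y u\<bar> \<le> 1/4" using y0 y1
        by (metis One_nat_def less_2_cases not_le)
      moreover have "y v = 3 * real v" using y2[OF v2] v2 by (simp add: xs_def)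
      moreover have "real v \<ge> 2" using v2 by simp
      ultimately show ?thesis by linarith
    qed
    then have "(y u - y v)^2 > 1"
      by (metis abs_ge_zero less_1_mult power2_eq_square power2_abs less_le_trans zero_less_one)
    then show ?thesis using uv by simp
  qed
  have sm: "(y 0 - y 1)^2 \<le> 1"
  proof -
    have "\<bar>y 0 - y 1\<bar> \<le> 1" using y0 y1 by linarith
    then show ?thesis by (metis abs_ge_zero abs_le_square_iff abs_one power_one)
  qed
  have "hk_potential (EE n) 1 y = sum ?g ?U" unfolding hk_potential_def by simp
  also have "\<dots> = ?g (0,1) + sum ?g (?U - {(0,1)})"
    using sum.remove[OF fin mem] by blast
  also have "sum ?g (?U - {(0,1)}) = sum (\<lambda>_. 1) (?U - {(0,1)})"
    using one by (rule sum.cong[OF refl])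
  also have "\<dots> = real (num_edges (EE n)) - 1"
  proof -
    have "card ?U > 0" using fin[of n] mem card_gt_0_iff by blast
    then show ?thesis using fin mem by (simp add: num_edges_def card_Diff_singleton of_nat_diff)
  qed
  finally show ?thesis using sm by simp
qed

lemma nb_big: assumes n: "n \<ge> 4" and v: "2 \<le> v" "v < n"
  shows "hk_nbhd (EE n) 1 (xs n) v = {v}"
proof -
  have "\<not> \<bar>xs n u - xs n v\<bar> \<le> 1" if "u \<noteq> v" for u
    using far[OF n that] v by auto
  then show ?thesis by (auto simp: hk_nbhd_def EE_def)
qed

lemma upd_big: assumes n: "n \<ge> 4" and v: "2 \<le> v" "v < n"
  shows "hk_update (EE n) 1 (xs n) v = xs n"
  using nb_big[OF assms] by (simp add: hk_update_def)

lemma nb01: assumes n: "n \<ge> 4" and v: "v \<le> 1"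
  shows "hk_nbhd (EE n) 1 (xs n) v = {0,1}"
proof -
  have a: "1 / real n \<le> 1" using n by (simp add: field_simps)
  have "\<not> \<bar>xs n u - xs n v\<bar> \<le> 1" if "u \<noteq> v" "u \<ge> 2" for u
    using far[OF n that(1)] v that by auto
  moreover have "\<bar>xs n u - xs n v\<bar> \<le> 1" if "u \<le> 1" for u
    using a that v by (cases u; cases v) (auto simp: xs_def)
  ultimately show ?thesis using v n
    apply (auto simp: hk_nbhd_def EE_def)
    apply (rule ccontr)
    apply (subgoal_tac "2 \<le> x")
     apply blast
    apply arith
    done
qed

lemma upd01: assumes n: "n \<ge> 4" and v: "v \<le> 1"
  shows "hk_update (EE n) 1 (xs n) v = (xs n)(v := 1 / (2 * real n))"
  using nb01[OF assms] by (simp add: hk_update_def xs_def mult.commute)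

lemma drop01: assumes n: "n \<ge> 4" and v: "v \<le> 1"
  shows "hk_potential (EE n) 1 (xs n) - hk_potential (EE n) 1 (hk_update (EE n) 1 (xs n) v)
     = 3 / (4 * real n ^ 2)"
proof -
  have a: "1 / real n \<le> 1/4" using n by (simp add: field_simps)
  have b: "1 / (2 * real n) \<le> 1/4" using n by (simp add: field_simps)
  have p1: "hk_potential (EE n) 1 (xs n) = real (num_edges (EE n)) - 1 + (1 / real n)^2"
    using pot2[OF n, of "xs n"] a by (simp add: xs_def)
  have p2: "hk_potential (EE n) 1 ((xs n)(v := 1 / (2 * real n)))
      = real (num_edges (EE n)) - 1 + (1 / (2 * real n))^2"
    using pot2[OF n, of "(xs n)(v := 1 / (2 * real n))"] a b v
    by (cases v) (auto simp: xs_def power2_commute)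
  have "(1 / real n)^2 - (1 / (2 * real n))^2 = 3 / (4 * real n ^ 2)"
    using n by (simp add: field_simps power2_eq_square)
  then show ?thesis using p1 p2 upd01[OF assms] by simp
qed

lemma drop_sum: assumes n: "n \<ge> 4"
  shows "hk_expected_drop n (EE n) 1 (xs n) = 3 / (2 * real n ^ 3)"
proof -
  let ?d = "\<lambda>v. hk_potential (EE n) 1 (xs n) - hk_potential (EE n) 1 (hk_update (EE n) 1 (xs n) v)"
  have "(\<Sum>v<n. ?d v) = (\<Sum>v<n. if v \<le> 1 then 3 / (4 * real n ^ 2) else 0)"
    by (rule sum.cong) (auto simp: drop01[OF n] upd_big[OF n])
  also have "\<dots> = (\<Sum>v\<in>{v\<in>{..<n}. v \<le> 1}. 3 / (4 * real n ^ 2))"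
    by (rule sum.inter_filter[symmetric]) simp
  also have "{v\<in>{..<n}. v \<le> 1} = {0,1}" using n by auto
  finally have "(\<Sum>v<n. ?d v) = 3 / (2 * real n ^ 2)" by simp
  then show ?thesis using n unfolding hk_expected_drop_def by (simp add: field_simps power3_eq_cube power2_eq_square)
qed

theorem theorem3:
  shows "\<exists>eps::real. eps > 0 \<and>
    (\<exists>(N::nat set) (G::nat \<Rightarrow> (nat \<times> nat) set) (X::nat \<Rightarrow> nat \<Rightarrow> real)
        (c1::real) C1 c2 C2 c3 C3.
       infinite N \<and> c1 > 0 \<and> C1 > 0 \<and> c2 > 0 \<and> C2 > 0 \<and> c3 > 0 \<and> C3 > 0 \<and>
       (\<forall>n\<in>N.
          hk_graph n (G n) \<and>
          c1 * real n ^ 2 \<le> real (num_edges (G n)) \<and>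
          real (num_edges (G n)) \<le> C1 * real n ^ 2 \<and>
          c2 * real n ^ 2 * eps ^ 2 \<le> hk_potential (G n) eps (X n) \<and>
          hk_potential (G n) eps (X n) \<le> C2 * real n ^ 2 * eps ^ 2 \<and>
          c3 * eps ^ 2 / real n ^ 3 \<le> hk_expected_drop n (G n) eps (X n) \<and>
          hk_expected_drop n (G n) eps (X n) \<le> C3 * eps ^ 2 / real n ^ 3))"
proof -
  let ?N = "{n::nat. even n \<and> n \<ge> 4}"
  have inf: "infinite ?N"
  proof
    assume "finite ?N"
    then obtain m where "\<forall>n\<in>?N. n \<le> m" by (auto simp: finite_nat_set_iff_bounded_le)
    moreover have "2*m+4 \<in> ?N" by auto
    ultimately have "2*m+4 \<le> m" by blast
    then show False by simp
  qed
  have main: "hk_graph n (EE n) \<and>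
          1/4 * real n ^ 2 \<le> real (num_edges (EE n)) \<and>
          real (num_edges (EE n)) \<le> 1 * real n ^ 2 \<and>
          1/8 * real n ^ 2 * 1 ^ 2 \<le> hk_potential (EE n) 1 (xs n) \<and>
          hk_potential (EE n) 1 (xs n) \<le> 1 * real n ^ 2 * 1 ^ 2 \<and>
          3/2 * 1 ^ 2 / real n ^ 3 \<le> hk_expected_drop n (EE n) 1 (xs n) \<and>
          hk_expected_drop n (EE n) 1 (xs n) \<le> 3/2 * 1 ^ 2 / real n ^ 3" if "n \<in> ?N" for n
  proof -
    from that obtain m where m: "n = 2*m" and n: "n \<ge> 4" by auto
    have e1: "1/4 * real n ^ 2 \<le> real (num_edges (EE n))"
      using edges_lower[of m] m by (simp add: power2_eq_square)
    have e2: "real (num_edges (EE n)) \<le> real n ^ 2" by (rule edges_upper)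
    have a: "1 / real n \<le> 1/4" using n by (simp add: field_simps)
    have p: "hk_potential (EE n) 1 (xs n) = real (num_edges (EE n)) - 1 + (1 / real n)^2"
      using pot2[OF n, of "xs n"] a by (simp add: xs_def)
    have sq: "(1 / real n)^2 \<le> 1" using a
      by (metis abs_ge_zero abs_le_square_iff abs_one le_divide_eq_1 less_eq_real_def
          order_trans power_one zero_le_divide_1_iff of_nat_0_le_iff abs_of_nonneg divide_le_eq_1 one_le_numeral)
    have sq0: "0 \<le> (1 / real n)^2" by simp
    have nn: "real n ^ 2 \<ge> 16"
    proof -
      have "real n \<ge> 4" using n by simp
      then have "real n * real n \<ge> 4 * 4" by (metis mult_mono' zero_le_numeral order_trans)
      then show ?thesis by (simp add: power2_eq_square)
    qed
    have q1: "1/8 * real n ^ 2 * 1 ^ 2 \<le> hk_potential (EE n) 1 (xs n)"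
    proof -
      have "1/8 * real n ^ 2 \<le> hk_potential (EE n) 1 (xs n)" using e1 p sq0 nn by linarith
      then show ?thesis by simp
    qed
    have q2: "hk_potential (EE n) 1 (xs n) \<le> 1 * real n ^ 2 * 1 ^ 2"
    proof -
      have "hk_potential (EE n) 1 (xs n) \<le> real n ^ 2" using e2 p sq by linarith
      then show ?thesis by simp
    qed
    show ?thesis using graph e1 e2 q1 q2 drop_sum[OF n] by (simp add: field_simps)
  qed
  show ?thesis
    apply (rule exI[of _ 1], rule conjI, simp)
    apply (rule exI[of _ ?N], rule exI[of _ EE], rule exI[of _ xs])
    apply (rule exI[of _ "1/4"], rule exI[of _ 1], rule exI[of _ "1/8"], rule exI[of _ 1],
           rule exI[of _ "3/2"], rule exI[of _ "3/2"])
    using inf main by simp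
qed

end
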